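(* Let $G$, $S$, $\phi_1,\phi_2$, $G_{\mathrm{aug}}$ be as in the setting below, let $C$ be a cycle of $\Lambda(G_{\mathrm{aug}})$ using only edges of $R(G_{\mathrm{aug}})$ and satisfying properties (1)–(4) below, and let $X_{\mathrm{aug}}=V(C)\cup S$. Then for any two vertices $u,v\in X_{\mathrm{aug}}$ there is a walk from $u$ to $v$ in $\Lambda(G_{\mathrm{aug}})$ of length at most $4|S|$ that uses no edge of $E_{\mathrm{aug}}=E(G_{\mathrm{aug}})\setminus E(G)$.
   Context: Setting: $G$ is a connected 1-plane graph without $\times$-crossings satisfying the kite-edge standing assumption, $S$ is a minimal separating set of $G$, $\phi_1,\phi_2$ are distinct flaps of $G-S$, and $G_{\mathrm{aug}}=G_{\mathrm{aug}}(S,\phi_1,\phi_2)$. Properties of $C$: (1) every vertex of $V_\times(C)$ is in $S$ or is a dummy vertex adjacent to a vertex of $S$; (2) every vertex of $S$ lies in $V_\times(C)$ or is adjacent to a dummy vertex in $V_\times(C)$; (3) there are $G$-vertices not in $S$ inside and outside $C$; (4) $S$ separates in $G_{\mathrm{aug}}$ the $G$-vertices inside $C$ from those outside. Definitions: a 1-plane graph is a graph with a good drawing (edges simple curves; two edges meet only at a common endpoint or a proper crossing; any two edges meet at most once; no three edges cross at a point) where each edge is crossed at most once. For a crossing of $(u,v)$ and $(w,x)$, two endpoints are consecutive if they are not $\{u,v\}$ and not $\{w,x\}$; an $\times$-crossing has no adjacent consecutive endpoints. The planarization $H^\times$ replaces each crossing by a dummy vertex adjacent to its four endpoints. An edge joining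 consecutive endpoints $u,x$ of a crossing with dummy vertex $c$ is a kite edge if it is uncrossed and $H^\times$ has a face bounded exactly by it and $(u,c),(c,x)$; standing assumption: every pair of adjacent consecutive endpoints of a crossing is joined by a kite edge of that crossing. $\Lambda(H)$ is obtained from $H^\times$ by inserting a face vertex inside each face and joining it by an edge to each occurrence of a vertex on the face boundary; $R(H)$ is the subgraph of edges incident to face vertices. $V_\times(C)$ is the set of vertices of $C$ that are $G$-vertices or dummy vertices. Separating sets, minimality and flaps are as usual ($G-S$ disconnected; flaps are its components). $G_{\mathrm{aug}}(S,\phi_1,\phi_2)$ is obtained from $G$ by repeatedly adding a missing kite edge between consecutive endpoints of a crossing whenever this keeps the flaps containing $\phi_1$ and $\phi_2$ distinct in (current graph)$-S$ (updating $\phi_1,\phi_2$ after each addition). *)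

theory Defs
  imports Main
begin

text \<open>
Combinatorial encoding of a 1-plane graph G by its planarization H^x, given as a
combinatorial map (rotation system) of genus 0.  Darts of H^x have type 'd,
vertices of H^x (G-vertices and dummy/crossing vertices) have type 'v.
  alpha: the involution pairing the two darts of an H^x-edge,
  sigma: the rotation (cyclic order of darts around their vertex),
  vx:    the vertex a dart emanates from,
  dum:   the set of dummy (crossing) vertices.
\<close>

record ('v,'d) pmap =
  darts :: "'d set"
  alpha :: "'d \<Rightarrow> 'd"
  sigma :: "'d \<Rightarrow> 'd"
  vx    :: "'d \<Rightarrow> 'v"
  dum   :: "'v set"

definition orb :: "('a \<Rightarrow> 'a) \<Rightarrow> 'a \<Rightarrow> 'a set" where
  "orb f x = {(f ^^ n) x | n. True}"

definition phi :: "('v,'d) pmap \<Rightarrow> 'd \<Rightarrow> 'd" where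
  "phi M = sigma M \<circ> alpha M"

definition hverts :: "('v,'d) pmap \<Rightarrow> 'v set" where
  "hverts M = vx M ` darts M"

definition gverts :: "('v,'d) pmap \<Rightarrow> 'v set" where
  "gverts M = hverts M - dum M"

definition faces :: "('v,'d) pmap \<Rightarrow> 'd set set" where
  "faces M = orb (phi M) ` darts M"

definition hedge :: "('v,'d) pmap \<Rightarrow> 'd \<Rightarrow> 'd set" where
  "hedge M d = {d, alpha M d}"

definition darts_at :: "('v,'d) pmap \<Rightarrow> 'v \<Rightarrow> 'd set" where
  "darts_at M v = {d \<in> darts M. vx M d = v}"

definition is_map :: "('v,'d) pmap \<Rightarrow> bool" where
  "is_map M \<longleftrightarrow> finite (darts M)
     \<and> bij_betw (alpha M) (darts M) (darts M)
     \<and> bij_betw (sigma M) (darts M) (darts M)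
     \<and> (\<forall>d\<in>darts M. alpha M d \<noteq> d \<and> alpha M (alpha M d) = d
                      \<and> vx M (sigma M d) = vx M d)
     \<and> (\<forall>d\<in>darts M. \<forall>d'\<in>darts M. vx M d = vx M d' \<longrightarrow> d' \<in> orb (sigma M) d)"

definition connected_map :: "('v,'d) pmap \<Rightarrow> bool" where
  "connected_map M \<longleftrightarrow> (\<forall>d\<in>darts M. \<forall>d'\<in>darts M.
     (d, d') \<in> {(x, y). x \<in> darts M \<and> (y = alpha M x \<or> y = sigma M x)}\<^sup>*)"

text \<open>Euler's formula V - E + F = 2 (genus 0, i.e. a plane/spherical embedding)\<close>
definition planar_map :: "('v,'d) pmap \<Rightarrow> bool" where
  "planar_map M \<longleftrightarrow> card (hverts M) + card (faces M) = card (darts M) div 2 + 2"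

text \<open>Dummy vertices: degree 4, all neighbours are G-vertices (each edge is crossed
at most once, no three edges through a crossing), and the four endpoints of a
crossing are distinct (two edges meet at most once).  The crossing edges are the
pairs of opposite darts d, sigma(sigma d), so every crossing is proper.\<close>
definition dummy_ok :: "('v,'d) pmap \<Rightarrow> bool" where
  "dummy_ok M \<longleftrightarrow> dum M \<subseteq> hverts M \<and>
     (\<forall>c\<in>dum M. card (darts_at M c) = 4
        \<and> (\<forall>d\<in>darts_at M c. vx M (alpha M d) \<notin> dum M)
        \<and> inj_on (\<lambda>d. vx M (alpha M d)) (darts_at M c))"

text \<open>Edges of G, each represented by the set of darts of its H^x-pieces.\<close>
definition gedges :: "('v,'d) pmap \<Rightarrow> 'd set set" where
  "gedges M =
     {hedge M d | d. d \<in> darts M \<and> vx M d \<notin> dum M \<and> vx M (alpha M d) \<notin> dum M}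
   \<union> {hedge M d \<union> hedge M (sigma M (sigma M d)) | d. d \<in> darts M \<and> vx M d \<in> dum M}"

definition gends :: "('v,'d) pmap \<Rightarrow> 'd set \<Rightarrow> 'v set" where
  "gends M e = vx M ` e - dum M"

definition simple_g :: "('v,'d) pmap \<Rightarrow> bool" where
  "simple_g M \<longleftrightarrow> (\<forall>e\<in>gedges M. card (gends M e) = 2) \<and> inj_on (gends M) (gedges M)"

definition gadj :: "('v,'d) pmap \<Rightarrow> 'v \<Rightarrow> 'v \<Rightarrow> bool" where
  "gadj M u v \<longleftrightarrow> (\<exists>e\<in>gedges M. gends M e = {u, v})"

definition hadj :: "('v,'d) pmap \<Rightarrow> 'v \<Rightarrow> 'v \<Rightarrow> bool" where
  "hadj M u v \<longleftrightarrow> (\<exists>d\<in>darts M. vx M d = u \<and> vx M (alpha M d) = v)"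

definition one_plane :: "('v,'d) pmap \<Rightarrow> bool" where
  "one_plane M \<longleftrightarrow> is_map M \<and> connected_map M \<and> planar_map M \<and> dummy_ok M \<and> simple_g M"

text \<open>For a dart d at a crossing c, the endpoints vx(alpha d) and vx(alpha(sigma d))
are consecutive endpoints of the crossing (every consecutive pair arises this way).
The face of H^x containing the angle at c between d and sigma d is the orbit of
sigma d; the kite condition says this face is a triangle c, x, u whose third side
is an (automatically uncrossed) edge joining x and u.\<close>
definition cons1 :: "('v,'d) pmap \<Rightarrow> 'd \<Rightarrow> 'v" where
  "cons1 M d = vx M (alpha M d)"
definition cons2 :: "('v,'d) pmap \<Rightarrow> 'd \<Rightarrow> 'v" where
  "cons2 M d = vx M (alpha M (sigma M d))"

definition kite :: "('v,'d) pmap \<Rightarrow> 'd \<Rightarrow> bool" where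
  "kite M d \<longleftrightarrow> phi M (phi M (sigma M d)) = alpha M d
                \<and> phi M (phi M (phi M (sigma M d))) = sigma M d"

definition no_x_crossings :: "('v,'d) pmap \<Rightarrow> bool" where
  "no_x_crossings M \<longleftrightarrow>
     (\<forall>c\<in>dum M. \<exists>d\<in>darts_at M c. gadj M (cons1 M d) (cons2 M d))"

definition kite_assumption :: "('v,'d) pmap \<Rightarrow> bool" where
  "kite_assumption M \<longleftrightarrow>
     (\<forall>c\<in>dum M. \<forall>d\<in>darts_at M c. gadj M (cons1 M d) (cons2 M d) \<longrightarrow> kite M d)"

definition gconn :: "('v,'d) pmap \<Rightarrow> 'v set \<Rightarrow> 'v set set \<Rightarrow> 'v \<Rightarrow> 'v \<Rightarrow> bool" where
  "gconn M S P a b \<longleftrightarrow>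
     (a, b) \<in> {(u, v). (gadj M u v \<or> {u, v} \<in> P) \<and> u \<notin> S \<and> v \<notin> S}\<^sup>*"

definition separating :: "('v,'d) pmap \<Rightarrow> 'v set \<Rightarrow> bool" where
  "separating M S \<longleftrightarrow> S \<subseteq> gverts M \<and>
     (\<exists>a\<in>gverts M - S. \<exists>b\<in>gverts M - S. \<not> gconn M S {} a b)"

definition minimal_sep :: "('v,'d) pmap \<Rightarrow> 'v set \<Rightarrow> bool" where
  "minimal_sep M S \<longleftrightarrow> separating M S \<and> (\<forall>S'. S' \<subset> S \<longrightarrow> \<not> separating M S')"

definition flap :: "('v,'d) pmap \<Rightarrow> 'v set \<Rightarrow> 'v set \<Rightarrow> bool" where
  "flap M S F \<longleftrightarrow> (\<exists>a\<in>gverts M - S. F = {b \<in> gverts M - S. gconn M S {} a b})"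

text \<open>the flaps of (M + P) - S containing F1 and F2 are distinct\<close>
definition keeps_apart :: "('v,'d) pmap \<Rightarrow> 'v set \<Rightarrow> 'v set \<Rightarrow> 'v set \<Rightarrow> 'v set set \<Rightarrow> bool" where
  "keeps_apart M S F1 F2 P \<longleftrightarrow> (\<forall>a\<in>F1. \<forall>b\<in>F2. \<not> gconn M S P a b)"

text \<open>One augmentation step: M' is M with one new uncrossed edge (darts a, alpha a)
inserted so that it is a kite edge of a crossing c of M joining consecutive
endpoints that are non-adjacent in M, and the flaps stay distinct.\<close>
definition aug_step :: "'v set \<Rightarrow> 'v set \<Rightarrow> 'v set \<Rightarrow> ('v,'d) pmap \<Rightarrow> ('v,'d) pmap \<Rightarrow> bool" where
  "aug_step S F1 F2 M M' \<longleftrightarrow> one_plane M'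
     \<and> (\<exists>a. a \<notin> darts M \<and> darts M' = darts M \<union> {a, alpha M' a})
     \<and> dum M' = dum M
     \<and> (\<forall>d\<in>darts M. alpha M' d = alpha M d \<and> vx M' d = vx M d
          \<and> sigma M d = (sigma M' ^^ (LEAST n. 0 < n \<and> (sigma M' ^^ n) d \<in> darts M)) d)
     \<and> (\<exists>c\<in>dum M. \<exists>d\<in>darts_at M c. \<not> gadj M (cons1 M d) (cons2 M d) \<and> kite M' d)
     \<and> keeps_apart M' S F1 F2 {}"

text \<open>G_aug(S, F1, F2): result of a maximal sequence of augmentation steps.\<close>
definition aug_result :: "'v set \<Rightarrow> 'v set \<Rightarrow> 'v set \<Rightarrow> ('v,'d) pmap \<Rightarrow> ('v,'d) pmap \<Rightarrow> bool" where
  "aug_result S F1 F2 M Ma \<longleftrightarrow>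
     (M, Ma) \<in> {(X, Y). aug_step S F1 F2 X Y}\<^sup>*
   \<and> (\<forall>c\<in>dum Ma. \<forall>d\<in>darts_at Ma c. \<not> gadj Ma (cons1 Ma d) (cons2 Ma d) \<longrightarrow>
        \<not> keeps_apart Ma S F1 F2 {{cons1 Ma d, cons2 Ma d}})"

text \<open>The graph Lambda(H): vertices of H^x and one vertex per face; edges are the
H^x-edges and, for each dart d, the R-edge joining the face vertex of the face
orbit of d to the occurrence (corner) of vx d between sigma^-1 d and d.\<close>
datatype ('v,'d) lv = HV 'v | FV "'d set"
datatype 'd le = HE "'d set" | RE 'd

definition lam_edges :: "('v,'d) pmap \<Rightarrow> 'd le set" where
  "lam_edges M = HE ` hedge M ` darts M \<union> RE ` darts M"

fun lam_ends :: "('v,'d) pmap \<Rightarrow> 'd le \<Rightarrow> ('v,'d) lv set" where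
  "lam_ends M (HE h) = HV ` vx M ` h"
| "lam_ends M (RE d) = {HV (vx M d), FV (orb (phi M) d)}"

fun is_RE :: "'d le \<Rightarrow> bool" where
  "is_RE (RE d) = True"
| "is_RE (HE h) = False"

definition lam_walk :: "('v,'d) pmap \<Rightarrow> ('v,'d) lv list \<Rightarrow> 'd le list \<Rightarrow> bool" where
  "lam_walk M vs es \<longleftrightarrow> length vs = Suc (length es) \<and>
     (\<forall>i<length es. es ! i \<in> lam_edges M \<and> lam_ends M (es ! i) = {vs ! i, vs ! Suc i})"

definition lam_cycle :: "('v,'d) pmap \<Rightarrow> ('v,'d) lv list \<Rightarrow> 'd le list \<Rightarrow> bool" where
  "lam_cycle M cv ce \<longleftrightarrow> length cv = length ce \<and> 2 \<le> length ce \<and> distinct cv \<and> distinct ce \<and>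
     (\<forall>i<length ce. ce ! i \<in> lam_edges M \<and>
        lam_ends M (ce ! i) = {cv ! i, cv ! ((Suc i) mod length ce)})"

text \<open>Sides of a cycle of R-edges (with corner darts Cd) in the plane map Lambda(M).
The faces of Lambda(M) are triangles T_d, one per dart d (face vertex of orb d, vx d,
vx (alpha d)); T_d shares the H-edge with T_(alpha d) and the R-edge RE (phi d) with
T_(phi d).  Two triangles lie on the same side of the cycle iff they are connected
through edges not on the cycle; a vertex off the cycle lies on the side of its
incident triangles.  (By Jordan there are exactly two sides: inside and outside.)\<close>
definition side_rel :: "('v,'d) pmap \<Rightarrow> 'd set \<Rightarrow> ('d \<times> 'd) set" where
  "side_rel M Cd = {(d, alpha M d) | d. d \<in> darts M}
                 \<union> {(d, phi M d) | d. d \<in> darts M \<and> phi M d \<notin> Cd}"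

definition same_side :: "('v,'d) pmap \<Rightarrow> 'd le list \<Rightarrow> 'v \<Rightarrow> 'v \<Rightarrow> bool" where
  "same_side M ce x y \<longleftrightarrow>
     (\<exists>d\<in>darts_at M x. \<exists>d'\<in>darts_at M y.
        (d, d') \<in> (side_rel M {d. RE d \<in> set ce} \<union> (side_rel M {d. RE d \<in> set ce})\<inverse>)\<^sup>*)"

end

theory Submission
  imports Defs
begin

definition okE :: "('v,'d) pmap \<Rightarrow> ('v,'d) pmap \<Rightarrow> ('v,'d) lv \<Rightarrow> ('v,'d) lv \<Rightarrow> bool" where
  "okE Ma M p q \<longleftrightarrow> (\<exists>e\<in>lam_edges Ma. lam_ends Ma e = {p,q} \<and> e \<notin> HE ` hedge Ma ` (darts Ma - darts M))"

inductive rch :: "('v,'d) pmap \<Rightarrow> ('v,'d) pmap \<Rightarrow> nat \<Rightarrow> ('v,'d) lv \<Rightarrow> ('v,'d) lv \<Rightarrow> bool"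
  for Ma M where
  r0: "rch Ma M 0 p p"
| rS: "okE Ma M p q \<Longrightarrow> rch Ma M n q r \<Longrightarrow> rch Ma M (Suc n) p r"

definition rw where "rw Ma M n p q \<longleftrightarrow> (\<exists>k\<le>n. rch Ma M k p q)"

lemma rch_walk:
  assumes "rch Ma M n p q"
  shows "\<exists>vs es. lam_walk Ma vs es \<and> vs ! 0 = p \<and> vs ! length es = q \<and> length es = n
             \<and> (\<forall>e\<in>set es. e \<notin> HE ` hedge Ma ` (darts Ma - darts M))"
  using assms
proof induction
  case (r0 p)
  show ?case by (rule exI[of _ "[p]"], rule exI[of _ "[]"]) (simp add: lam_walk_def)
next
  case (rS p q n r)
  from rS.IH obtain vs es where w: "lam_walk Ma vs es" "vs ! 0 = q" "vs ! length es = r"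
    "length es = n" "\<forall>e\<in>set es. e \<notin> HE ` hedge Ma ` (darts Ma - darts M)" by blast
  from rS.hyps(1) obtain e where e: "e\<in>lam_edges Ma" "lam_ends Ma e = {p,q}"
    "e \<notin> HE ` hedge Ma ` (darts Ma - darts M)" unfolding okE_def by blast
  have "lam_walk Ma (p#vs) (e#es)"
    using w(1,2) e(1,2) unfolding lam_walk_def
    by (auto simp: nth_Cons split: nat.splits)
  then show ?case using w e
    by (intro exI[of _ "p#vs"] exI[of _ "e#es"]) simp
qed

lemma rch_trans: "rch Ma M n p q \<Longrightarrow> rch Ma M m q r \<Longrightarrow> rch Ma M (n+m) p r"
  by (induction rule: rch.induct) (auto intro: rch.intros)

lemma okE_sym: "okE Ma M p q \<Longrightarrow> okE Ma M q p"
  unfolding okE_def by (metis insert_commute)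

lemma rch_one: "okE Ma M p q \<Longrightarrow> rch Ma M 1 p q"
  by (metis One_nat_def rch.r0 rch.rS)

lemma rch_sym: "rch Ma M n p q \<Longrightarrow> rch Ma M n q p"
proof (induction rule: rch.induct)
  case (r0 p) then show ?case by (rule rch.r0)
next
  case (rS p q n r)
  have "rch Ma M (n+1) r p" using rch_trans[OF rS.IH rch_one[OF okE_sym[OF rS.hyps(1)]]] .
  then show ?case by simp
qed

lemma rw_refl: "rw Ma M n p p"
  unfolding rw_def using rch.r0 by blast

lemma rw_edge: "okE Ma M p q \<Longrightarrow> rw Ma M 1 p q"
  unfolding rw_def using rch_one by blast

lemma rw_sym: "rw Ma M n p q \<Longrightarrow> rw Ma M n q p"
  unfolding rw_def using rch_sym by blast

lemma rw_mono: "rw Ma M n p q \<Longrightarrow> n \<le> m \<Longrightarrow> rw Ma M m p q"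
  unfolding rw_def by (meson order_trans)

lemma rw_trans: "rw Ma M n p q \<Longrightarrow> rw Ma M m q r \<Longrightarrow> rw Ma M (n+m) p r"
  unfolding rw_def by (meson add_mono rch_trans)

lemma crossing: "P 0 \<Longrightarrow> \<not> P N \<Longrightarrow> \<exists>m<N. P m \<and> \<not> P (Suc m)"
  by (induction N) (auto simp: less_Suc_eq)

lemma aug_inv:
  assumes "(M, X) \<in> {(X, Y). aug_step S F1 F2 X Y}\<^sup>*" "one_plane M"
  shows "one_plane X \<and> darts M \<subseteq> darts X \<and> dum X = dum M
     \<and> (\<forall>d\<in>darts M. alpha X d = alpha M d \<and> vx X d = vx M d)
     \<and> (\<forall>c\<in>dum M. darts_at X c = darts_at M c)"
  using assms(1)
proof induction
  case base then show ?case using assms(2) by simp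
next
  case (step X Y)
  have st: "aug_step S F1 F2 X Y" using step.hyps(2) by simp
  then have Y: "one_plane Y" "darts X \<subseteq> darts Y" "dum Y = dum X"
    "\<forall>d\<in>darts X. alpha Y d = alpha X d \<and> vx Y d = vx X d"
    unfolding aug_step_def by auto
  have X: "one_plane X" using step.IH by simp
  have dat: "darts_at Y c = darts_at X c" if c: "c \<in> dum M" for c
  proof -
    have cX: "c \<in> dum X" and cY: "c \<in> dum Y" using c step.IH Y by auto
    have sub: "darts_at X c \<subseteq> darts_at Y c" using Y(2,4) unfolding darts_at_def by auto
    have fin: "finite (darts_at Y c)" using Y(1) unfolding one_plane_def is_map_def darts_at_def by auto
    have "card (darts_at Y c) = 4" using Y(1) cY unfolding one_plane_def dummy_ok_def by auto
    moreover have "card (darts_at X c) = 4" using X cX unfolding one_plane_def dummy_ok_def by auto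
    ultimately show ?thesis using card_subset_eq[OF fin sub] by simp
  qed
  show ?case using step.IH Y dat by auto
qed

theorem lemma2:
  fixes M Ma :: "('v,'d) pmap" and S F1 F2 :: "'v set"
    and cv :: "('v,'d) lv list" and ce :: "'d le list"
  assumes G: "one_plane M" "no_x_crossings M" "kite_assumption M"
    and S: "minimal_sep M S"
    and flaps: "flap M S F1" "flap M S F2" "F1 \<noteq> F2"
    and aug: "aug_result S F1 F2 M Ma"
    and C: "lam_cycle Ma cv ce" "\<forall>e\<in>set ce. is_RE e"
    and P1: "\<forall>v. HV v \<in> set cv \<longrightarrow> v \<in> S \<or> (v \<in> dum Ma \<and> (\<exists>s\<in>S. hadj Ma v s))"
    and P2: "\<forall>s\<in>S. HV s \<in> set cv \<or> (\<exists>c\<in>dum Ma. HV c \<in> set cv \<and> hadj Ma c s)"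
    and P3: "\<exists>x\<in>gverts M - S. \<exists>y\<in>gverts M - S. HV x \<notin> set cv \<and> HV y \<notin> set cv
               \<and> \<not> same_side Ma ce x y"
    and P4: "\<forall>x\<in>gverts M - S. \<forall>y\<in>gverts M - S. HV x \<notin> set cv \<and> HV y \<notin> set cv
               \<and> \<not> same_side Ma ce x y \<longrightarrow> \<not> gconn Ma S {} x y"
  shows "\<forall>p\<in>set cv \<union> HV ` S. \<forall>q\<in>set cv \<union> HV ` S.
           \<exists>vs es. lam_walk Ma vs es \<and> vs ! 0 = p \<and> vs ! length es = q
             \<and> length es \<le> 4 * card S
             \<and> (\<forall>e\<in>set es. e \<notin> HE ` hedge Ma ` (darts Ma - darts M))"
proof -
  define n where "n = length ce"
  have inv: "one_plane Ma \<and> darts M \<subseteq> darts Ma \<and> dum Ma = dum M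
     \<and> (\<forall>d\<in>darts M. alpha Ma d = alpha M d \<and> vx Ma d = vx M d)
     \<and> (\<forall>c\<in>dum M. darts_at Ma c = darts_at M c)"
    using aug_inv[of M Ma S F1 F2] aug G(1) unfolding aug_result_def by blast
  have Cc: "length cv = n" "2 \<le> n"
    "\<forall>i<n. ce ! i \<in> lam_edges Ma \<and> lam_ends Ma (ce ! i) = {cv ! i, cv ! (Suc i mod n)}"
    using C(1) unfolding lam_cycle_def n_def by auto
  have mapM: "is_map M" using G(1) unfolding one_plane_def by simp
  have dE: "okE Ma M (HV c) (HV s)" if c: "c \<in> dum Ma" and h: "hadj Ma c s" for c s
  proof -
    obtain d where d: "d\<in>darts Ma" "vx Ma d = c" "vx Ma (alpha Ma d) = s"
      using h unfolding hadj_def by blast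
    have "d \<in> darts_at Ma c" using d unfolding darts_at_def by simp
    then have dM: "d \<in> darts M" using inv c unfolding darts_at_def by auto
    have aM: "alpha Ma d \<in> darts M"
      using inv dM mapM unfolding is_map_def by (metis bij_betw_apply)
    have "HE (hedge Ma d) \<in> lam_edges Ma" using d(1) unfolding lam_edges_def by blast
    moreover have "lam_ends Ma (HE (hedge Ma d)) = {HV c, HV s}"
      using d unfolding hedge_def by auto
    moreover have "HE (hedge Ma d) \<notin> HE ` hedge Ma ` (darts Ma - darts M)"
    proof
      assume "HE (hedge Ma d) \<in> HE ` hedge Ma ` (darts Ma - darts M)"
      then obtain d' where d': "d' \<in> darts Ma - darts M" "hedge Ma d = hedge Ma d'" by auto
      then have "d' \<in> hedge Ma d" unfolding hedge_def by auto
      then show False using d' dM aM unfolding hedge_def by auto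
    qed
    ultimately show ?thesis unfolding okE_def by blast
  qed
  have cE: "okE Ma M (cv!k) (cv!(Suc k mod n))" if k: "k < n" for k
  proof -
    have "ce ! k \<in> set ce" using k n_def by simp
    then obtain d where d: "ce ! k = RE d" using C(2) by (cases "ce ! k" rule: le.exhaust) auto
    have "ce!k \<in> lam_edges Ma" "lam_ends Ma (ce!k) = {cv ! k, cv ! (Suc k mod n)}" using Cc(3) k by auto
    moreover have "ce ! k \<notin> HE ` hedge Ma ` (darts Ma - darts M)" using d by auto
    ultimately show ?thesis unfolding okE_def by blast
  qed
  have near: "\<exists>s\<in>S. rw Ma M 1 (HV v) (HV s)" if v: "HV v \<in> set cv" for v
  proof -
    from P1 v have "v \<in> S \<or> (v \<in> dum Ma \<and> (\<exists>s\<in>S. hadj Ma v s))" by blast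
    then show ?thesis
    proof
      assume "v \<in> S" then show ?thesis using rw_refl by blast
    next
      assume "v \<in> dum Ma \<and> (\<exists>s\<in>S. hadj Ma v s)"
      then show ?thesis using dE rw_edge by blast
    qed
  qed
  have posS: "\<exists>i<n. rw Ma M 1 (cv!i) (HV s)" if s: "s \<in> S" for s
  proof -
    from P2 s have "HV s \<in> set cv \<or> (\<exists>c\<in>dum Ma. HV c \<in> set cv \<and> hadj Ma c s)" by blast
    then show ?thesis
    proof
      assume "HV s \<in> set cv"
      then obtain i where "i < n" "cv ! i = HV s" using Cc(1) by (metis in_set_conv_nth)
      then show ?thesis using rw_refl by metis
    next
      assume "\<exists>c\<in>dum Ma. HV c \<in> set cv \<and> hadj Ma c s"
      then obtain c i where "c \<in> dum Ma" "hadj Ma c s" "i < n" "cv ! i = HV c"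
        using Cc(1) by (metis in_set_conv_nth)
      then show ?thesis using dE rw_edge by metis
    qed
  qed
  have Tex: "\<exists>s. s\<in>S \<and> rw Ma M 2 (cv!k) (HV s) \<and> rw Ma M 2 (cv!(Suc k mod n)) (HV s)"
    if k: "k < n" for k
  proof -
    have k': "Suc k mod n < n" using k by simp
    have "ce ! k \<in> set ce" using k n_def by simp
    then obtain d where d: "ce ! k = RE d" using C(2) by (cases "ce ! k" rule: le.exhaust) auto
    then have ends: "{HV (vx Ma d), FV (orb (phi Ma) d)} = {cv ! k, cv ! (Suc k mod n)}"
    proof -
      have "lam_ends Ma (ce!k) = {cv ! k, cv ! (Suc k mod n)}" using Cc(3) k by blast
      then show ?thesis using d by simp
    qed
    have e1: "rw Ma M 1 (cv!k) (cv!(Suc k mod n))" using cE k rw_edge by blast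
    have inK: "cv ! k \<in> set cv" "cv ! (Suc k mod n) \<in> set cv" using k k' Cc(1) by auto
    from ends have "HV (vx Ma d) = cv ! k \<or> HV (vx Ma d) = cv ! (Suc k mod n)" by blast
    then show ?thesis
    proof
      assume h: "HV (vx Ma d) = cv ! k"
      then obtain s where s: "s\<in>S" "rw Ma M 1 (cv!k) (HV s)" using near inK by metis
      have "rw Ma M (1+1) (cv!(Suc k mod n)) (HV s)" using rw_trans[OF rw_sym[OF e1] s(2)] .
      then show ?thesis using s rw_mono[OF s(2), of 2] by (auto simp: numeral_2_eq_2)
    next
      assume h: "HV (vx Ma d) = cv ! (Suc k mod n)"
      then obtain s where s: "s\<in>S" "rw Ma M 1 (cv!(Suc k mod n)) (HV s)" using near inK by metis
      have "rw Ma M (1+1) (cv!k) (HV s)" using rw_trans[OF e1 s(2)] .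
      then show ?thesis using s rw_mono[OF s(2), of 2] by (auto simp: numeral_2_eq_2)
    qed
  qed
  have "\<forall>k. \<exists>s. k < n \<longrightarrow> (s\<in>S \<and> rw Ma M 2 (cv!k) (HV s) \<and> rw Ma M 2 (cv!(Suc k mod n)) (HV s))"
    using Tex by blast
  from choice[OF this] obtain T where T: "\<And>k. k < n \<Longrightarrow> T k \<in> S \<and> rw Ma M 2 (cv!k) (HV (T k))
     \<and> rw Ma M 2 (cv!(Suc k mod n)) (HV (T k))" by blast
  have Tcons: "rw Ma M 4 (HV (T k)) (HV (T (Suc k mod n)))" if k: "k < n" for k
  proof -
    have k': "Suc k mod n < n" using k by simp
    have "rw Ma M (2+2) (HV (T k)) (HV (T (Suc k mod n)))"
      using rw_trans[OF rw_sym[OF conjunct2[OF conjunct2[OF T[OF k]]]]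
          conjunct1[OF conjunct2[OF T[OF k']]]] .
    then show ?thesis by simp
  qed
  have step: "\<exists>s\<in>B. \<exists>s'\<in>S-B. rw Ma M 4 (HV s) (HV s')"
    if B: "B \<subseteq> S" "s0 \<in> B" "t \<in> S - B" for B s0 t
  proof -
    obtain i where i: "i < n" "rw Ma M 1 (cv!i) (HV s0)" using posS B by blast
    obtain j where j: "j < n" "rw Ma M 1 (cv!j) (HV t)" using posS B by blast
    define f where "f m = T ((i+m) mod n)" for m
    have n0: "0 < n" using Cc(2) by simp
    have fS: "f m \<in> S" for m using T[of "(i+m) mod n"] n0 unfolding f_def by simp
    have "rw Ma M (1+2) (HV s0) (HV (f 0))"
      using rw_trans[OF rw_sym[OF i(2)] conjunct1[OF conjunct2[OF T[OF i(1)]]]] i(1)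
      unfolding f_def by simp
    then have a0: "rw Ma M 4 (HV s0) (HV (f 0))" by (rule rw_mono) simp
    define N where "N = j + n - i"
    have jN: "(i + N) mod n = j" using i j unfolding N_def by simp
    have "rw Ma M (1+2) (HV t) (HV (f N))"
      using rw_trans[OF rw_sym[OF j(2)] conjunct1[OF conjunct2[OF T[OF j(1)]]]] jN
      unfolding f_def by simp
    then have "rw Ma M 4 (HV t) (HV (f N))" by (rule rw_mono) simp
    then have aN: "rw Ma M 4 (HV (f N)) (HV t)" by (rule rw_sym)
    show ?thesis
    proof (cases "f 0 \<in> B")
      case False then show ?thesis using B a0 fS by blast
    next
      case f0: True
      show ?thesis
      proof (cases "f N \<in> B")
        case True then show ?thesis using B aN by blast
      next
        case False
        from crossing[of "\<lambda>m. f m \<in> B", OF f0 False] obtain m where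
          m: "f m \<in> B" "f (Suc m) \<notin> B" by blast
        have "rw Ma M 4 (HV (f m)) (HV (f (Suc m)))"
          using Tcons[of "(i+m) mod n"] n0 unfolding f_def by (simp add: mod_Suc_eq)
        then show ?thesis using m fS by blast
      qed
    qed
  qed
  have finS: "finite S"
  proof -
    have "S \<subseteq> gverts M" using S unfolding minimal_sep_def separating_def by simp
    moreover have "finite (gverts M)" using mapM unfolding is_map_def gverts_def hverts_def by simp
    ultimately show ?thesis by (rule finite_subset)
  qed
  have SS: "S \<noteq> {}" using T[of 0] Cc(2) by auto
  have allS: "rw Ma M (4 * (card S - 1)) (HV s0) (HV t)" if s0: "s0 \<in> S" and t: "t \<in> S" for s0 t
  proof -
    define Bm where "Bm m = {s\<in>S. rw Ma M (4*m) (HV s0) (HV s)}" for m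
    have BmS: "Bm m \<subseteq> S" for m unfolding Bm_def by auto
    have finB: "finite (Bm m)" for m using finite_subset[OF BmS finS] .
    have mono: "Bm m \<subseteq> Bm (Suc m)" for m
    proof
      fix x assume "x \<in> Bm m"
      then show "x \<in> Bm (Suc m)" unfolding Bm_def using rw_mono[of Ma M "4*m" _ _ "4 * Suc m"] by auto
    qed
    have claim: "Bm m = S \<or> Suc m \<le> card (Bm m)" for m
    proof (induction m)
      case 0
      have "s0 \<in> Bm 0" using s0 rw_refl unfolding Bm_def by blast
      then have "card (Bm 0) > 0" using finB by (auto simp: card_gt_0_iff)
      then show ?case by simp
    next
      case (Suc m)
      show ?case
      proof (cases "Bm m = S")
        case True then show ?thesis using mono[of m] BmS[of "Suc m"] by auto
      next
        case False
        then have cm: "Suc m \<le> card (Bm m)" using Suc.IH by simp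
        obtain t' where t': "t' \<in> S - Bm m" using False BmS by blast
        have s0B: "s0 \<in> Bm m" using s0 rw_refl unfolding Bm_def by blast
        obtain s s' where ss: "s \<in> Bm m" "s' \<in> S - Bm m" "rw Ma M 4 (HV s) (HV s')"
          using step[OF BmS s0B t'] by blast
        have "rw Ma M (4*m + 4) (HV s0) (HV s')"
          using rw_trans[of Ma M "4*m" "HV s0" "HV s" 4 "HV s'"] ss unfolding Bm_def by blast
        then have "s' \<in> Bm (Suc m)" using ss unfolding Bm_def by (simp add: add.commute)
        then have "insert s' (Bm m) \<subseteq> Bm (Suc m)" using mono by blast
        then have "card (insert s' (Bm m)) \<le> card (Bm (Suc m))" using finB card_mono by blast
        moreover have "card (insert s' (Bm m)) = Suc (card (Bm m))" using ss finB by simp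
        ultimately show ?thesis using cm by simp
      qed
    qed
    have "Bm (card S - 1) = S"
    proof -
      have "card S > 0" using finS SS by (simp add: card_gt_0_iff)
      then have "Bm (card S - 1) = S \<or> card S \<le> card (Bm (card S - 1))" using claim[of "card S - 1"] by simp
      then show ?thesis using card_seteq[OF finS BmS] by blast
    qed
    then show ?thesis using t unfolding Bm_def by auto
  qed
  have toS: "\<exists>s\<in>S. rw Ma M 2 p (HV s)" if p: "p \<in> set cv \<union> HV ` S" for p
  proof (cases "p \<in> set cv")
    case True
    then obtain k where "k < n" "p = cv ! k" using Cc(1) by (metis in_set_conv_nth)
    then show ?thesis using T by blast
  next
    case False then show ?thesis using p rw_refl by blast
  qed
  show ?thesis
  proof (intro ballI)
    fix p q assume p: "p \<in> set cv \<union> HV ` S" and q: "q \<in> set cv \<union> HV ` S"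
    obtain s where s: "s\<in>S" "rw Ma M 2 p (HV s)" using toS p by blast
    obtain t where t: "t\<in>S" "rw Ma M 2 q (HV t)" using toS q by blast
    have "rw Ma M (2 + 4 * (card S - 1) + 2) p q"
      using rw_trans[OF rw_trans[OF s(2) allS[OF s(1) t(1)]] rw_sym[OF t(2)]] .
    moreover have "2 + 4 * (card S - 1) + 2 = 4 * card S"
    proof -
      have "card S > 0" using finS SS by (simp add: card_gt_0_iff)
      then show ?thesis by simp
    qed
    ultimately obtain k where "k \<le> 4 * card S" "rch Ma M k p q" unfolding rw_def by auto
    then show "\<exists>vs es. lam_walk Ma vs es \<and> vs ! 0 = p \<and> vs ! length es = q
             \<and> length es \<le> 4 * card S
             \<and> (\<forall>e\<in>set es. e \<notin> HE ` hedge Ma ` (darts Ma - darts M))"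
      using rch_walk by metis
  qed
qed

end
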